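(* Let $X,Y,Z$ be topological spaces, $f:X\times Y\to Z$ a mapping, and $V\subset Y$ a nonempty open set. Suppose that one of the following holds: (i) $f$ is vertically quasicontinuous at every point of $X\times V$, and for each $x\in X$ there is a dense subset $D_x$ of the space $V$ such that $f$ is lower $X$-quasicontinuous at every point of $\{x\}\times D_x$; (ii) $f$ is lower $Y$-quasicontinuous at every point of $X\times V$, and there is a dense subset $D$ of the space $V$ such that $f$ is lower $X$-quasicontinuous at every point of $X\times D$. Then the set-valued mapping $F^V:X\ni x\mapsto f_x(V)\in 2^Z$ is lower quasicontinuous.
   Context: $f_x(y)=f(x,y)$; $2^Z$ is the set of nonempty subsets of $Z$. A set-valued mapping $F:X\to 2^Z$ is lower quasicontinuous if for each $x_0\in X$, each neighborhood $U$ of $x_0$ and each open $W\subset Z$ with $F(x_0)\cap W\neq\emptyset$, there is an open $O\subset X$ with $\emptyset\ne O\subset U$ and $F(x)\cap W\neq\emptyset$ for every $x\in O$. The mapping $f$ is lower $X$-quasicontinuous (lower quasicontinuous with respect to the variable $x$) at $(a,b)$ if for each neighborhood $U$ of $a$ in $X$, each neighborhood $V'$ of $b$ in $Y$, and each neighborhood $W$ of $f(a,b)$ in $Z$, there is an open $O\subset X$ with $\emptyset\neq O\subset U$ and $f(\{x\}\times V')\cap W\neq\emptyset$ for every $x\in O$. Symmetrically, $f$ is lower $Y$-quasicontinuous at $(a,b)$ if for all such $U,V',W$ there is an open $O\subset Y$ with $\emptyset\ne O\subset V'$ and $f(U\times\{y\})\cap W\neq\emptyset$ for every $y\in O$. The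 mapping $f$ is vertically quasicontinuous at $(a,b)$ if for all such $U,V',W$ there are a point $x\in U$ and an open $O\subset Y$ with $\emptyset\neq O\subset V'$ and $f(\{x\}\times O)\subset W$. *)

theory Defs
  imports "HOL-Analysis.Analysis"
begin

definition nhd :: "'a::topological_space set \<Rightarrow> 'a \<Rightarrow> bool" where
  "nhd U a \<longleftrightarrow> (\<exists>S. open S \<and> a \<in> S \<and> S \<subseteq> U)"

definition lower_quasicont_sv :: "('a::topological_space \<Rightarrow> 'c::topological_space set) \<Rightarrow> bool" where
  "lower_quasicont_sv F \<longleftrightarrow> (\<forall>x0 U W. nhd U x0 \<longrightarrow> open W \<longrightarrow> F x0 \<inter> W \<noteq> {} \<longrightarrow>
      (\<exists>G. open G \<and> G \<noteq> {} \<and> G \<subseteq> U \<and> (\<forall>x\<in>G. F x \<inter> W \<noteq> {})))"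

definition lower_X_quasicont_at ::
  "('a::topological_space \<Rightarrow> 'b::topological_space \<Rightarrow> 'c::topological_space) \<Rightarrow> 'a \<Rightarrow> 'b \<Rightarrow> bool" where
  "lower_X_quasicont_at f a b \<longleftrightarrow> (\<forall>U V' W. nhd U a \<longrightarrow> nhd V' b \<longrightarrow> nhd W (f a b) \<longrightarrow>
      (\<exists>G. open G \<and> G \<noteq> {} \<and> G \<subseteq> U \<and> (\<forall>x\<in>G. (\<lambda>y. f x y) ` V' \<inter> W \<noteq> {})))"

definition lower_Y_quasicont_at ::
  "('a::topological_space \<Rightarrow> 'b::topological_space \<Rightarrow> 'c::topological_space) \<Rightarrow> 'a \<Rightarrow> 'b \<Rightarrow> bool" where
  "lower_Y_quasicont_at f a b \<longleftrightarrow> (\<forall>U V' W. nhd U a \<longrightarrow> nhd V' b \<longrightarrow> nhd W (f a b) \<longrightarrow>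
      (\<exists>G. open G \<and> G \<noteq> {} \<and> G \<subseteq> V' \<and> (\<forall>y\<in>G. (\<lambda>x. f x y) ` U \<inter> W \<noteq> {})))"

definition vert_quasicont_at ::
  "('a::topological_space \<Rightarrow> 'b::topological_space \<Rightarrow> 'c::topological_space) \<Rightarrow> 'a \<Rightarrow> 'b \<Rightarrow> bool" where
  "vert_quasicont_at f a b \<longleftrightarrow> (\<forall>U V' W. nhd U a \<longrightarrow> nhd V' b \<longrightarrow> nhd W (f a b) \<longrightarrow>
      (\<exists>x\<in>U. \<exists>G. open G \<and> G \<noteq> {} \<and> G \<subseteq> V' \<and> (\<lambda>y. f x y) ` G \<subseteq> W))"

definition dense_in :: "'b::topological_space set \<Rightarrow> 'b set \<Rightarrow> bool" where
  "dense_in D V \<longleftrightarrow> D \<subseteq> V \<and> V \<subseteq> closure D"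

end

theory Submission
  imports Defs
begin

lemma dense_meet:
  assumes "dense_in D V" "open Ob" "Ob \<noteq> {}" "Ob \<subseteq> V"
  obtains y where "y \<in> Ob" "y \<in> D"
proof -
  have "Ob \<inter> closure D \<noteq> {}" using assms unfolding dense_in_def by blast
  hence "Ob \<inter> D \<noteq> {}" using open_Int_closure_eq_empty[OF assms(2)] by blast
  thus ?thesis using that by blast
qed

lemma nhd_open: "open S \<Longrightarrow> a \<in> S \<Longrightarrow> nhd S a"
  unfolding nhd_def by blast

theorem proposition2p3:
  fixes f :: "'a::topological_space \<Rightarrow> 'b::topological_space \<Rightarrow> 'c::topological_space"
    and V :: "'b set"
  assumes "open V" and "V \<noteq> {}"
    and "((\<forall>x. \<forall>y\<in>V. vert_quasicont_at f x y) \<and>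
          (\<forall>x. \<exists>D. dense_in D V \<and> (\<forall>y\<in>D. lower_X_quasicont_at f x y)))
       \<or> ((\<forall>x. \<forall>y\<in>V. lower_Y_quasicont_at f x y) \<and>
          (\<exists>D. dense_in D V \<and> (\<forall>x. \<forall>y\<in>D. lower_X_quasicont_at f x y)))"
  shows "lower_quasicont_sv (\<lambda>x. (\<lambda>y. f x y) ` V)"
  unfolding lower_quasicont_sv_def
proof (intro allI impI)
  fix x0 U W
  assume hU: "nhd U x0" and hW: "open W" and ne: "(\<lambda>y. f x0 y) ` V \<inter> W \<noteq> {}"
  obtain S where S: "open S" "x0 \<in> S" "S \<subseteq> U" using hU unfolding nhd_def by blast
  obtain y0 where y0: "y0 \<in> V" "f x0 y0 \<in> W" using ne by blast
  have key: "\<exists>G. open G \<and> G \<noteq> {} \<and> G \<subseteq> S \<and> (\<forall>x\<in>G. (\<lambda>y. f x y) ` V \<inter> W \<noteq> {})"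
    if "x1 \<in> S" "y1 \<in> V" "f x1 y1 \<in> W" "lower_X_quasicont_at f x1 y1" for x1 y1
    using that(4)[unfolded lower_X_quasicont_at_def, rule_format, OF
      nhd_open[OF S(1) that(1)] nhd_open[OF assms(1) that(2)] nhd_open[OF hW that(3)]] .
  have "\<exists>G. open G \<and> G \<noteq> {} \<and> G \<subseteq> S \<and> (\<forall>x\<in>G. (\<lambda>y. f x y) ` V \<inter> W \<noteq> {})"
    using assms(3)
  proof
    assume h: "(\<forall>x. \<forall>y\<in>V. vert_quasicont_at f x y) \<and>
          (\<forall>x. \<exists>D. dense_in D V \<and> (\<forall>y\<in>D. lower_X_quasicont_at f x y))"
    have vq: "vert_quasicont_at f x0 y0" using h y0 by blast
    obtain x1 Ob where x1: "x1 \<in> S" "open Ob" "Ob \<noteq> {}" "Ob \<subseteq> V" "(\<lambda>y. f x1 y) ` Ob \<subseteq> W"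
      using vq[unfolded vert_quasicont_at_def, rule_format, OF
        nhd_open[OF S(1) S(2)] nhd_open[OF assms(1) y0(1)] nhd_open[OF hW y0(2)]]
      by blast
    obtain D where D: "dense_in D V" "\<forall>y\<in>D. lower_X_quasicont_at f x1 y" using h by blast
    obtain y1 where y1: "y1 \<in> Ob" "y1 \<in> D" using dense_meet[OF D(1) x1(2-4)] by blast
    have a: "f x1 y1 \<in> W" using x1(5) y1(1) by blast
    have b: "y1 \<in> V" using x1(4) y1(1) by blast
    have c: "lower_X_quasicont_at f x1 y1" using D(2) y1(2) by blast
    show ?thesis by (rule key[OF x1(1) b a c])
  next
    assume h: "(\<forall>x. \<forall>y\<in>V. lower_Y_quasicont_at f x y) \<and>
          (\<exists>D. dense_in D V \<and> (\<forall>x. \<forall>y\<in>D. lower_X_quasicont_at f x y))"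
    have lq: "lower_Y_quasicont_at f x0 y0" using h y0 by blast
    obtain Ob where Ob: "open Ob" "Ob \<noteq> {}" "Ob \<subseteq> V" "\<forall>y\<in>Ob. (\<lambda>x. f x y) ` S \<inter> W \<noteq> {}"
      using lq[unfolded lower_Y_quasicont_at_def, rule_format, OF
        nhd_open[OF S(1) S(2)] nhd_open[OF assms(1) y0(1)] nhd_open[OF hW y0(2)]]
      by blast
    obtain D where D: "dense_in D V" "\<forall>x. \<forall>y\<in>D. lower_X_quasicont_at f x y" using h by blast
    obtain y1 where y1: "y1 \<in> Ob" "y1 \<in> D" using dense_meet[OF D(1) Ob(1-3)] by blast
    then obtain x1 where x1: "x1 \<in> S" "f x1 y1 \<in> W" using Ob(4) by blast
    have b: "y1 \<in> V" using Ob(3) y1(1) by blast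
    have c: "lower_X_quasicont_at f x1 y1" using D(2) y1(2) by blast
    show ?thesis by (rule key[OF x1(1) b x1(2) c])
  qed
  thus "\<exists>G. open G \<and> G \<noteq> {} \<and> G \<subseteq> U \<and> (\<forall>x\<in>G. (\<lambda>y. f x y) ` V \<inter> W \<noteq> {})"
    using S(3) by blast
qed

end
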